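(* Let $k\ge 2$, $p\in(0,1)$, $q=1-p$. For all $n\ge 1$, $$M^{(k)}_n(p)=(k-1)n-\frac pq\sum_{i=0}^{n-1}\big(1-f^{(k)}_i\big).$$
   Context: Matchbox process: fix integers $k\ge 2$, $n\ge 1$ and $p\in(0,1)$, $q=1-p$. Initially $k$ boxes each contain $n$ matches. At each time step, independently, with probability $p$ a match is removed from a box currently containing the largest number of matches, and with probability $q$ from a box currently containing the smallest number (ties broken arbitrarily). The process is run until some box first becomes empty; the residue is the total number of matches in the other $k-1$ boxes at that time, and $M^{(k)}_n(p)$ is its expectation. Let $s^{(k)}_i=\frac{k-1}{ki-1}\binom{ki-1}{i-1}$ ($i\ge1$), $S^{(k)}(z)=\sum_{i\ge1}s^{(k)}_iz^i$, and define $f^{(k)}_0,f^{(k)}_1,\dots$ by the formal power series identity $\sum_{i\ge0}f^{(k)}_iz^i=\dfrac{1}{1-\frac1qS^{(k)}(p^{k-1}qz)}$. ($f^{(k)}_i$ is the probability that the process is in a state with all boxes equal after $ki$ steps.) *)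

theory Defs
  imports "HOL-Probability.Probability" "HOL-Computational_Algebra.Formal_Power_Series"
begin

text \<open>A state of the matchbox process is the multiset of box contents.
  Removing a match from "a box with the largest (smallest) number of matches"
  only depends on this multiset, so tie-breaking is irrelevant.\<close>

definition dec_max :: "nat multiset \<Rightarrow> nat multiset" where
  "dec_max s = s - {#Max (set_mset s)#} + {#Max (set_mset s) - 1#}"

definition dec_min :: "nat multiset \<Rightarrow> nat multiset" where
  "dec_min s = s - {#Min (set_mset s)#} + {#Min (set_mset s) - 1#}"

lemma dec_max_less:
  assumes "s \<noteq> {#}" "0 \<notin># s"
  shows "sum_mset (dec_max s) < sum_mset s"
proof -
  let ?m = "Max (set_mset s)"
  have mem: "?m \<in># s" using assms(1) by (simp add: Max_in)
  have pos: "?m > 0" using mem assms(2) by (cases "?m") auto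
  have "sum_mset s = sum_mset (s - {#?m#}) + ?m"
    using sum_mset.remove[OF mem] by simp
  then show ?thesis using pos unfolding dec_max_def by simp
qed

lemma dec_min_less:
  assumes "s \<noteq> {#}" "0 \<notin># s"
  shows "sum_mset (dec_min s) < sum_mset s"
proof -
  let ?m = "Min (set_mset s)"
  have mem: "?m \<in># s" using assms(1) by (simp add: Min_in)
  have pos: "?m > 0" using mem assms(2) by (cases "?m") auto
  have "sum_mset s = sum_mset (s - {#?m#}) + ?m"
    using sum_mset.remove[OF mem] by simp
  then show ?thesis using pos unfolding dec_min_def by simp
qed

text \<open>Distribution of the residue (total number of matches left, the empty box
  contributing 0) when the process is started in state s: with probability p
  (Bernoulli True) a match is taken from a largest box, otherwise from a smallest
  box; the process stops as soon as some box is empty.\<close>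

function residue_pmf :: "real \<Rightarrow> nat multiset \<Rightarrow> nat pmf" where
  "residue_pmf p s =
     (if s = {#} \<or> 0 \<in># s then return_pmf (sum_mset s)
      else bind_pmf (bernoulli_pmf p)
             (\<lambda>b. if b then residue_pmf p (dec_max s) else residue_pmf p (dec_min s)))"
  by auto
termination
  by (relation "Wellfounded.measure (\<lambda>(p, s). sum_mset s)")
     (auto intro: dec_max_less dec_min_less)

definition M :: "nat \<Rightarrow> nat \<Rightarrow> real \<Rightarrow> real" where
  "M k n p = measure_pmf.expectation (residue_pmf p (replicate_mset k n)) real"

definition s_coeff :: "nat \<Rightarrow> nat \<Rightarrow> real" where
  "s_coeff k i = (real k - 1) / (real (k * i) - 1) * real ((k * i - 1) choose (i - 1))"

definition S_fps :: "nat \<Rightarrow> real fps" where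
  "S_fps k = Abs_fps (\<lambda>i. if i = 0 then 0 else s_coeff k i)"

definition f_coeff :: "nat \<Rightarrow> real \<Rightarrow> nat \<Rightarrow> real" where
  "f_coeff k p i =
     fps_nth (inverse (1 - fps_const (1 / (1 - p)) *
        fps_compose (S_fps k) (fps_const (p ^ (k - 1) * (1 - p)) * fps_X))) i"

end

theory Submission
  imports Defs
begin

lemma compose_lin_nth:
  fixes S :: "real fps"
  shows "fps_nth (S oo (fps_const c * fps_X)) n = c ^ n * fps_nth S n"
proof -
  have "(fps_const c * fps_X :: real fps) ^ i = fps_const (c ^ i) * fps_X ^ i" for i
    by (simp add: power_mult_distrib fps_const_power)
  then show ?thesis
    unfolding fps_compose_nth power_mult_distrib fps_const_power[symmetric] fps_mult_left_const_nth fps_X_power_nth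
    by (simp add: if_distrib sum.delta cong: if_cong)
qed

lemma binom_id:
  fixes c D u :: nat
  assumes "u \<ge> 1" "D + (Suc c) * u = t"
  shows "real t * (real ((t - 1) choose u) - real c * real ((t - 1) choose (u - 1))) = real D * real (t choose u)"
proof -
  have t1: "t \<ge> 1" using assms by (cases u) auto
  have a: "t * ((t - 1) choose (u - 1)) = u * (t choose u)"
    using Suc_times_binomial[of "u - 1" "t - 1"] assms t1 by simp
  have b: "t * ((t - 1) choose u) = (t - u) * (t choose u)"
    using binomial_absorb_comp[of t u] by simp
  have tu: "t - u = D + c * u" using assms by simp
  have "real t * (real ((t - 1) choose u) - real c * real ((t - 1) choose (u - 1)))
      = real (t * ((t - 1) choose u)) - real c * real (t * ((t - 1) choose (u - 1)))"
    by (simp add: algebra_simps)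
  also have "\<dots> = real ((D + c * u) * (t choose u)) - real c * real (u * (t choose u))"
    using a b tu by simp
  also have "\<dots> = real D * real (t choose u)" by (simp add: algebra_simps)
  finally show ?thesis .
qed

definition Nc :: "nat \<Rightarrow> nat \<Rightarrow> nat \<Rightarrow> real" where
  "Nc c D u = (if u = 0 then 1 else
     real ((D + Suc c * u - 1) choose u) - real c * real ((D + Suc c * u - 1) choose (u - 1)))"

lemma Nc_zero: "u \<ge> 1 \<Longrightarrow> Nc c 0 u = 0"
proof -
  assume u: "u \<ge> 1"
  have "real (Suc c * u) * (real ((Suc c * u - 1) choose u) - real c * real ((Suc c * u - 1) choose (u - 1)))
     = real 0 * real ((Suc c * u) choose u)"
    by (rule binom_id[where c=c and D=0 and u=u and t="Suc c * u"]) (use u in simp_all)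
  then have "real (Suc c * u) * Nc c 0 u = 0" using u by (simp add: Nc_def)
  moreover have "Suc c * u > 0" using u by simp
  then have "real (Suc c * u) > 0" by (simp only: of_nat_0_less_iff)
  ultimately show ?thesis by simp
qed

lemma Nc_rec:
  assumes "D \<ge> 1" "u \<ge> 1"
  shows "Nc c D u = Nc c (D - 1) u + Nc c (D + c) (u - 1)"
proof (cases "u = 1")
  case True
  then show ?thesis using assms by (simp add: Nc_def)
next
  case False
  then obtain v where v: "u = Suc (Suc v)" using assms by (metis One_nat_def Suc_le_D Suc_pred not_one_le_zero le_zero_eq not0_implies_Suc)
  define t where "t = D + Suc c * u - 2"
  have t1: "D + Suc c * u - 1 = Suc t" using assms v by (simp add: t_def)
  have t2: "D - 1 + Suc c * u - 1 = t" using assms v by (simp add: t_def)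
  have t3: "D + c + Suc c * (u - 1) - 1 = t" using assms v by (simp add: t_def algebra_simps)
  show ?thesis
    unfolding Nc_def using v t1 t2 t3 by (simp add: algebra_simps)
qed

lemma Nc_s:
  assumes "c \<ge> 1" "j \<ge> 1"
  shows "Nc c c (j - 1) = s_coeff (Suc c) j"
proof (cases "j = 1")
  case True
  then show ?thesis using assms by (simp add: Nc_def s_coeff_def)
next
  case False
  define t where "t = c + Suc c * (j - 1)"
  have tn: "Suc c * j = Suc t" using assms by (cases j) (auto simp: t_def)
  have tj: "real (Suc c * j) - 1 = real t" using tn by simp
  have tj2: "Suc c * j - 1 = t" using tn by simp
  have tp: "t > 0" using assms by (simp add: t_def)
  have "real t * Nc c c (j - 1) = real c * real (t choose (j - 1))"
    using binom_id[where c=c and D=c and u="j - 1" and t=t] False assms by (simp add: Nc_def t_def)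
  then have "Nc c c (j - 1) = real c / real t * real (t choose (j - 1))"
    using tp by (simp add: field_simps)
  moreover have "s_coeff (Suc c) j = (real (Suc c) - 1) / (real (Suc c * j) - 1) * real ((Suc c * j - 1) choose (j - 1))"
    by (simp only: s_coeff_def)
  moreover have "\<dots> = real c / real t * real (t choose (j - 1))" by (simp only: tn) simp
  ultimately show ?thesis by simp
qed

function K :: "nat \<Rightarrow> real \<Rightarrow> nat \<Rightarrow> nat \<Rightarrow> real" where
  "K c p m D = (if D = 0 then (if m = 0 then 1 else K c p (m - 1) c)
     else p * K c p m (D - 1) + (1 - p) * (if m = 0 then 0 else K c p (m - 1) (D + c)))"
  by auto
termination
  apply (relation "Wellfounded.measure (\<lambda>(c, p, m, D). Suc c * m + D)")
    apply auto
   apply (case_tac m; simp)+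
  done

declare K.simps[simp del]

definition hit :: "nat \<Rightarrow> real \<Rightarrow> nat \<Rightarrow> nat \<Rightarrow> real" where
  "hit c p D u = Nc c D u * p ^ (D + c * u) * (1 - p) ^ u"

lemma hit0: "hit c p 0 u = (if u = 0 then 1 else 0)"
  by (cases "u = 0") (simp add: hit_def Nc_def, simp add: hit_def Nc_zero)

lemma hit_rec:
  assumes "D \<ge> 1"
  shows "hit c p D u = p * hit c p (D - 1) u + (if u = 0 then 0 else (1 - p) * hit c p (D + c) (u - 1))"
proof (cases "u = 0")
  case True
  then show ?thesis using assms by (simp add: hit_def Nc_def power_Suc[symmetric])
next
  case False
  have e1: "D + c * u = Suc (D - 1 + c * u)" using assms by simp
  have e2: "D + c * u = D + c + c * (u - 1)" using False by (cases u) auto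
  have e3: "(1 - p) ^ u = (1 - p) * (1 - p) ^ (u - 1)" using False by (cases u) auto
  have h1: "p * hit c p (D - 1) u = Nc c (D - 1) u * p ^ (D + c * u) * (1 - p) ^ u"
    unfolding hit_def e1 by simp
  have h2: "(1 - p) * hit c p (D + c) (u - 1) = Nc c (D + c) (u - 1) * p ^ (D + c * u) * (1 - p) ^ u"
    unfolding hit_def e2 e3 by simp
  have "hit c p D u = Nc c (D - 1) u * p ^ (D + c * u) * (1 - p) ^ u + Nc c (D + c) (u - 1) * p ^ (D + c * u) * (1 - p) ^ u"
    using Nc_rec[of D u c] assms False unfolding hit_def by (simp add: algebra_simps)
  then show ?thesis using False h1 h2 by simp
qed

lemma K_decomp: "K c p m D = (\<Sum>u\<le>m. hit c p D u * K c p (m - u) 0)"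
proof (induction "Suc c * m + D" arbitrary: m D rule: less_induct)
  case less
  show ?case
  proof (cases "D = 0")
    case True
    have "(\<Sum>u\<le>m. hit c p D u * K c p (m - u) 0) = (\<Sum>u\<le>m. if u = 0 then K c p m 0 else 0)"
      by (rule sum.cong) (simp_all add: hit0 True)
    also have "\<dots> = K c p m 0" by simp
    finally show ?thesis using True by simp
  next
    case False
    then have D1: "D \<ge> 1" by simp
    have IH1: "K c p m (D - 1) = (\<Sum>u\<le>m. hit c p (D - 1) u * K c p (m - u) 0)"
      using less[of m "D - 1"] False by simp
    have Kr: "K c p m D = p * K c p m (D - 1) + (1 - p) * (if m = 0 then 0 else K c p (m - 1) (D + c))"
      using False by (subst K.simps) simp
    have split: "(\<Sum>u\<le>m. hit c p D u * K c p (m - u) 0)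
       = p * (\<Sum>u\<le>m. hit c p (D - 1) u * K c p (m - u) 0)
         + (\<Sum>u\<le>m. (if u = 0 then 0 else (1 - p) * hit c p (D + c) (u - 1)) * K c p (m - u) 0)"
      by (simp add: hit_rec[OF D1] sum_distrib_left sum.distrib[symmetric] algebra_simps)
    show ?thesis
    proof (cases m)
      case 0
      then show ?thesis using Kr IH1 split by auto
    next
      case (Suc m')
      have IH2: "K c p m' (D + c) = (\<Sum>u\<le>m'. hit c p (D + c) u * K c p (m' - u) 0)"
        using less[of m' "D + c"] Suc by simp
      have "(\<Sum>u\<le>m. (if u = 0 then 0 else (1 - p) * hit c p (D + c) (u - 1)) * K c p (m - u) 0)
          = (\<Sum>u\<le>m'. (1 - p) * hit c p (D + c) u * K c p (m' - u) 0)"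
        unfolding Suc sum.atMost_Suc_shift by simp
      also have "\<dots> = (1 - p) * K c p m' (D + c)"
        by (simp add: IH2 sum_distrib_left algebra_simps)
      finally show ?thesis using Kr IH1 split Suc by simp
    qed
  qed
qed

lemma K_rec0:
  assumes "i \<ge> 1"
  shows "K c p i 0 = (\<Sum>j\<le>i. (if j = 0 then 0 else hit c p c (j - 1)) * K c p (i - j) 0)"
proof -
  obtain i' where i: "i = Suc i'" using assms by (cases i) auto
  have "K c p i 0 = K c p i' c" using i by (subst K.simps) simp
  also have "\<dots> = (\<Sum>u\<le>i'. hit c p c u * K c p (i' - u) 0)" by (rule K_decomp)
  also have "\<dots> = (\<Sum>j\<le>i. (if j = 0 then 0 else hit c p c (j - 1)) * K c p (i - j) 0)"
    unfolding i sum.atMost_Suc_shift by simp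
  finally show ?thesis .
qed

lemma K_f:
  assumes c: "c \<ge> 1" and p: "0 < p" "p < 1"
  shows "K c p i 0 = f_coeff (Suc c) p i"
proof -
  define q where "q = 1 - p"
  have q: "q > 0" using p by (simp add: q_def)
  define R where "R = fps_const (1 / q) * (S_fps (Suc c) oo (fps_const (p ^ c * q) * fps_X))"
  define F where "F = inverse (1 - R)"
  have f_eq: "f_coeff (Suc c) p i = fps_nth F i" for i
    by (simp add: f_coeff_def F_def R_def q_def)
  have Rn: "fps_nth R j = (if j = 0 then 0 else hit c p c (j - 1))" for j
  proof (cases "j = 0")
    case True
    then show ?thesis by (simp add: R_def compose_lin_nth S_fps_def)
  next
    case False
    have e1: "c + c * (j - 1) = c * j" using False by (cases j) auto
    have e2: "q ^ j = q * q ^ (j - 1)" using False by (cases j) auto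
    have "fps_nth R j = (1 / q) * ((p ^ c * q) ^ j * s_coeff (Suc c) j)"
      using False by (simp add: R_def compose_lin_nth S_fps_def)
    also have "\<dots> = s_coeff (Suc c) j * p ^ (c * j) * q ^ (j - 1)"
      using q by (simp add: power_mult_distrib power_mult e2)
    also have "\<dots> = hit c p c (j - 1)"
    proof -
      have "Nc c c (j - 1) = s_coeff (Suc c) j" using Nc_s[OF c, of j] False by simp
      then show ?thesis unfolding hit_def e1 q_def by simp
    qed
    finally show ?thesis using False by simp
  qed
  have R0: "fps_nth (1 - R) 0 \<noteq> 0" using Rn[of 0] by simp
  have "F * (1 - R) = 1" unfolding F_def by (rule inverse_mult_eq_1[OF R0])
  then have FR: "F = 1 + R * F" by (simp add: algebra_simps)
  have Fn: "fps_nth F i = (if i = 0 then 1 else 0) + (\<Sum>j\<le>i. fps_nth R j * fps_nth F (i - j))" for i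
    by (subst FR) (simp add: fps_mult_nth atLeast0AtMost)
  show ?thesis
  proof (induction i rule: less_induct)
    case (less i)
    show ?case
    proof (cases "i = 0")
      case True
      then show ?thesis using Fn[of 0] Rn[of 0] by (simp add: f_eq K.simps)
    next
      case False
      have "K c p i 0 = (\<Sum>j\<le>i. (if j = 0 then 0 else hit c p c (j - 1)) * K c p (i - j) 0)"
        using K_rec0 False by simp
      also have "\<dots> = (\<Sum>j\<le>i. fps_nth R j * fps_nth F (i - j))"
      proof (rule sum.cong)
        fix j assume j: "j \<in> {..i}"
        show "(if j = 0 then 0 else hit c p c (j - 1)) * K c p (i - j) 0 = fps_nth R j * fps_nth F (i - j)"
        proof (cases "j = 0")
          case True then show ?thesis by (simp add: Rn)
        next
          case False
          then have "K c p (i - j) 0 = fps_nth F (i - j)" using less[of "i - j"] j \<open>i \<noteq> 0\<close> f_eq by simp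
          then show ?thesis using False by (simp add: Rn)
        qed
      qed simp
      also have "\<dots> = fps_nth F i" using Fn[of i] False by simp
      finally show ?thesis by (simp add: f_eq)
    qed
  qed
qed


definition bal :: "nat \<Rightarrow> nat \<Rightarrow> nat \<Rightarrow> nat multiset" where
  "bal c d r = replicate_mset r (Suc d) + replicate_mset (c - r) d"

definition balR :: "nat \<Rightarrow> nat \<Rightarrow> nat multiset" where
  "balR c R = bal c (R div c) (R mod c)"

definition st :: "nat \<Rightarrow> nat \<Rightarrow> nat \<Rightarrow> nat multiset" where
  "st c L D = add_mset L (balR c (c * L + D))"

lemma balR_eq: "r < c \<Longrightarrow> balR c (c * d + r) = bal c d r"
  by (simp add: balR_def)

lemma set_bal: "r < c \<Longrightarrow> set_mset (bal c d r) = (if r = 0 then {d} else {Suc d, d})"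
  by (auto simp: bal_def)

lemma sum_bal: "r < c \<Longrightarrow> sum_mset (bal c d r) = c * d + r"
proof -
  assume "r < c"
  then have "r * Suc d + (c - r) * d = c * d + r"
    by (simp add: algebra_simps diff_mult_distrib)
  then show ?thesis by (simp add: bal_def)
qed

lemma decm_comm: "M \<noteq> L \<Longrightarrow> add_mset L B - {#M#} + {#x#} = add_mset L (B - {#M#} + {#x#})"
  by (simp add: multiset_eq_iff)

lemma dec_bal_pos: "0 < r \<Longrightarrow> r < c \<Longrightarrow> bal c d r - {#Suc d#} + {#d#} = bal c d (r - 1)"
proof -
  assume r: "0 < r" "r < c"
  then obtain r' where r': "r = Suc r'" by (cases r) auto
  have "c - r' = Suc (c - r)" using r r' by simp
  then show ?thesis using r' by (simp add: bal_def)
qed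

lemma dec_bal_zero: "0 < c \<Longrightarrow> d \<ge> 1 \<Longrightarrow> bal c d 0 - {#d#} + {#d - 1#} = bal c (d - 1) (c - 1)"
proof -
  assume c: "0 < c" and d: "d \<ge> 1"
  then obtain c' where c': "c = Suc c'" by (cases c) auto
  show ?thesis using c' d by (simp add: bal_def)
qed

lemma st_sum: "c \<ge> 1 \<Longrightarrow> sum_mset (st c L D) = L + c * L + D"
proof -
  assume c: "c \<ge> 1"
  have "sum_mset (balR c (c * L + D)) = c * L + D"
    using sum_bal[of "(c * L + D) mod c" c "(c * L + D) div c"] c
    by (simp add: balR_def) (metis add.assoc distrib_left mult_div_mod_eq)
  then show ?thesis by (simp add: st_def)
qed

lemma st_zero: "0 \<in># st c 0 D"
  by (simp add: st_def)

lemma st_eq: "c \<ge> 1 \<Longrightarrow> st c L 0 = replicate_mset (Suc c) L"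
  by (simp add: st_def balR_def bal_def)

lemma dec_eq:
  assumes "c \<ge> 1" "L \<ge> 1"
  shows "dec_max (st c L 0) = st c (L - 1) c" "dec_min (st c L 0) = st c (L - 1) c"
proof -
  have s: "set_mset (replicate_mset (Suc c) L) = {L}" by simp
  have e: "c * (L - 1) + c = c * L" using assms by (cases L) auto
  have "st c (L - 1) c = add_mset (L - 1) (replicate_mset c L)"
    unfolding st_def e using assms by (simp add: balR_def bal_def)
  then show "dec_max (st c L 0) = st c (L - 1) c" "dec_min (st c L 0) = st c (L - 1) c"
    unfolding st_eq[OF assms(1)] dec_max_def dec_min_def s by simp_all
qed

lemma dec_gen:
  assumes c: "c \<ge> 1" and L: "L \<ge> 1" and D: "D \<ge> 1"
  shows "st c L D \<noteq> {#}" "0 \<notin># st c L D"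
    "dec_max (st c L D) = st c L (D - 1)" "dec_min (st c L D) = st c (L - 1) (D + c)"
proof -
  define R where "R = c * L + D"
  define d where "d = R div c"
  define r where "r = R mod c"
  have Rdr: "R = c * d + r" by (simp add: d_def r_def)
  have rc: "r < c" using c by (simp add: r_def)
  have B: "balR c R = bal c d r" by (simp add: balR_def d_def r_def)
  have dL: "d \<ge> L" using c by (simp add: d_def R_def)
  have dL2: "r = 0 \<Longrightarrow> d > L"
  proof (rule ccontr)
    assume "r = 0" "\<not> L < d"
    then have "d = L" using dL by simp
    then show False using Rdr \<open>r = 0\<close> D by (simp add: R_def)
  qed
  have stB: "st c L D = add_mset L (bal c d r)" by (simp add: st_def B[unfolded R_def])
  show "st c L D \<noteq> {#}" by (simp add: st_def)
  have sb: "set_mset (st c L D) = insert L (if r = 0 then {d} else {Suc d, d})"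
    using stB set_bal[OF rc] by simp
  show "0 \<notin># st c L D"
    using sb L dL by (auto split: if_splits)
  have mn: "Min (set_mset (st c L D)) = L"
    using sb dL by (auto simp: min_def)
  have e: "c * (L - 1) + (D + c) = R" using L by (cases L) (auto simp: R_def)
  show "dec_min (st c L D) = st c (L - 1) (D + c)"
  proof -
    have "st c (L - 1) (D + c) = add_mset (L - 1) (balR c R)" unfolding st_def e ..
    then show ?thesis unfolding dec_min_def mn using L by (simp add: st_def R_def)
  qed
  show "dec_max (st c L D) = st c L (D - 1)"
  proof (cases "r = 0")
    case True
    have mx: "Max (set_mset (st c L D)) = d" using sb True dL by (auto simp: max_def)
    have R1: "c * L + (D - 1) = c * (d - 1) + (c - 1)"
      using Rdr True dL2 c D unfolding R_def by (cases d) (auto simp: algebra_simps)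
    have "dec_max (st c L D) = add_mset L (bal c d 0 - {#d#} + {#d - 1#})"
      unfolding dec_max_def mx unfolding stB True using dL2 True by (simp add: decm_comm)
    also have "\<dots> = add_mset L (bal c (d - 1) (c - 1))" using dec_bal_zero c dL2 True L by simp
    also have "\<dots> = st c L (D - 1)"
    proof -
      have cm1: "c - 1 < c" using c by simp
      show ?thesis unfolding st_def R1 balR_eq[OF cm1] ..
    qed
    finally show ?thesis .
  next
    case False
    have mx: "Max (set_mset (st c L D)) = Suc d" using sb False dL by (auto simp: max_def)
    have R1: "c * L + (D - 1) = c * d + (r - 1)"
      using Rdr False D unfolding R_def by simp
    have "dec_max (st c L D) = add_mset L (bal c d r - {#Suc d#} + {#d#})"
      unfolding dec_max_def mx unfolding stB using dL by (simp add: decm_comm)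
    also have "\<dots> = add_mset L (bal c d (r - 1))" using dec_bal_pos False rc by simp
    also have "\<dots> = st c L (D - 1)" unfolding st_def R1 using rc by (simp add: balR_eq)
    finally show ?thesis .
  qed
qed


declare residue_pmf.simps[simp del]

definition Ex :: "real \<Rightarrow> nat multiset \<Rightarrow> real" where
  "Ex p s = measure_pmf.expectation (residue_pmf p s) real"

lemma finite_res: "0 < p \<Longrightarrow> p < 1 \<Longrightarrow> finite (set_pmf (residue_pmf p s))"
proof (induction p s rule: residue_pmf.induct)
  case (1 p s)
  show ?case
  proof (cases "s = {#} \<or> 0 \<in># s")
    case True
    then show ?thesis by (subst residue_pmf.simps) simp
  next
    case False
    have fin: "finite (set_pmf (if b then residue_pmf p (dec_max s) else residue_pmf p (dec_min s)))" for b
      using 1 False by (cases b) auto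
    have "finite (\<Union>b\<in>set_pmf (bernoulli_pmf p). set_pmf (if b then residue_pmf p (dec_max s) else residue_pmf p (dec_min s)))"
      using fin by (intro finite_UN_I) (simp_all add: finite_subset[OF subset_UNIV])
    then show ?thesis using False by (subst residue_pmf.simps) (simp add: set_bind_pmf)
  qed
qed

lemma Ex_stop: "s = {#} \<or> 0 \<in># s \<Longrightarrow> Ex p s = real (sum_mset s)"
  unfolding Ex_def by (subst residue_pmf.simps) simp

lemma Ex_step:
  assumes "0 < p" "p < 1" "s \<noteq> {#}" "0 \<notin># s"
  shows "Ex p s = p * Ex p (dec_max s) + (1 - p) * Ex p (dec_min s)"
proof -
  have "Ex p s = measure_pmf.expectation (bernoulli_pmf p \<bind>
      (\<lambda>b. if b then residue_pmf p (dec_max s) else residue_pmf p (dec_min s))) real"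
    unfolding Ex_def using assms by (subst residue_pmf.simps) simp
  also have "\<dots> = (\<Sum>b\<in>UNIV. pmf (bernoulli_pmf p) b *\<^sub>R measure_pmf.expectation
      (if b then residue_pmf p (dec_max s) else residue_pmf p (dec_min s)) real)"
    by (rule pmf_expectation_bind) (simp_all add: finite_res assms)
  also have "\<dots> = p * Ex p (dec_max s) + (1 - p) * Ex p (dec_min s)"
    using assms by (simp add: UNIV_bool Ex_def)
  finally show ?thesis .
qed

lemma alg1:
  fixes A r p q c L D S1 S2 :: real
  assumes "q = 1 - p" "q * r = p" "A = c - r"
  shows "p*(A*L + (D-1) + r*S1) + q*(A*(L-1) + (D+c) + r*S2) = A*L + D + r*(p*S1 + q*S2)"
proof -
  have "p*(A*L + (D-1) + r*S1) + q*(A*(L-1) + (D+c) + r*S2) = (p+q)*(A*L + D) - p - q*A + q*c + p*r*S1 + (q*r)*S2"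
    by (simp add: algebra_simps)
  also have "\<dots> = A*L + D + r*(p*S1 + q*S2)"
  proof -
    have pq: "p + q = 1" using assms(1) by simp
    have "q * c = q * (A + r)" using assms(3) by simp
    also have "\<dots> = q * A + q * r" by (simp only: distrib_left)
    finally have qc: "q * c = q * A + p" using assms(2) by simp
    show ?thesis unfolding pq using qc assms(2) by (simp add: algebra_simps)
  qed
  finally show ?thesis .
qed
lemma alg0:
  fixes A r p q c L S1 :: real
  assumes "A = c - r"
  shows "A * (L - 1) + c + r * S1 = A * L + r * (1 + S1)"
  using assms by (simp add: algebra_simps)
lemma G_formula:
  assumes c: "c \<ge> 1" and p: "0 < p" "p < 1"
  shows "Ex p (st c L D) = (real c - p / (1 - p)) * real L + real D + p / (1 - p) * (\<Sum>m<L. K c p m D)"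
proof (induction "Suc c * L + D" arbitrary: L D rule: less_induct)
  case less
  have q: "1 - p \<noteq> 0" using p by simp
  show ?case
  proof (cases "L = 0")
    case True
    then show ?thesis using st_zero[of c D] st_sum[OF c, of 0 D] by (simp add: Ex_stop)
  next
    case False
    then have L1: "L \<ge> 1" by simp
    show ?thesis
    proof (cases "D = 0")
      case True
      have ne: "st c L 0 \<noteq> {#}" "0 \<notin># st c L 0" using st_eq[OF c, of L] L1 by auto
      have "Ex p (st c L 0) = Ex p (st c (L - 1) c)"
        using Ex_step[of p "st c L 0"] p ne dec_eq[OF c L1] by (simp add: algebra_simps)
      also have "\<dots> = (real c - p / (1 - p)) * (real L - 1) + real c + p / (1 - p) * (\<Sum>m<L - 1. K c p m c)"
      proof -
        have m: "Suc c * (L - 1) + c < Suc c * L + D" using L1 by (cases L) auto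
        show ?thesis using less[OF m] L1 by (simp add: of_nat_diff)
      qed
      also have "\<dots> = (real c - p / (1 - p)) * real L + p / (1 - p) * (1 + (\<Sum>m<L - 1. K c p m c))"
        by (rule alg0) simp
      also have "(1 + (\<Sum>m<L - 1. K c p m c)) = (\<Sum>m<L. K c p m 0)"
      proof -
        obtain L' where L': "L = Suc L'" using L1 by (cases L) auto
        show ?thesis unfolding L' sum.lessThan_Suc_shift by (simp add: K.simps)
      qed
      finally show ?thesis using True by simp
    next
      case False
      then have D1: "D \<ge> 1" by simp
      note g = dec_gen[OF c L1 D1]
      have st1: "Ex p (st c L D) = p * Ex p (st c L (D - 1)) + (1 - p) * Ex p (st c (L - 1) (D + c))"
        using Ex_step[of p "st c L D"] p g by simp
      have rD: "real (D - 1) = real D - 1" and rL: "real (L - 1) = real L - 1"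
        and rDc: "real (D + c) = real D + real c" using L1 D1 by (simp_all add: of_nat_diff)
      have e1: "Ex p (st c L (D - 1)) = (real c - p / (1 - p)) * real L + (real D - 1) + p / (1 - p) * (\<Sum>m<L. K c p m (D - 1))"
        using less[of L "D - 1"] D1 unfolding rD by simp
      have e2: "Ex p (st c (L - 1) (D + c)) = (real c - p / (1 - p)) * (real L - 1) + (real D + real c) + p / (1 - p) * (\<Sum>m<L - 1. K c p m (D + c))"
      proof -
        have m: "Suc c * (L - 1) + (D + c) < Suc c * L + D" using L1 by (cases L) auto
        show ?thesis using less[OF m] unfolding rL rDc by simp
      qed
      have Ksum: "(\<Sum>m<L. K c p m D) = p * (\<Sum>m<L. K c p m (D - 1)) + (1 - p) * (\<Sum>m<L - 1. K c p m (D + c))"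
      proof -
        obtain L' where L': "L = Suc L'" using L1 by (cases L) auto
        have "(\<Sum>m<L. K c p m D) = (\<Sum>m<L. p * K c p m (D - 1) + (1 - p) * (if m = 0 then 0 else K c p (m - 1) (D + c)))"
          using False by (intro sum.cong refl) (subst K.simps, simp)
        also have "\<dots> = p * (\<Sum>m<L. K c p m (D - 1)) + (1 - p) * (\<Sum>m<L. (if m = 0 then 0 else K c p (m - 1) (D + c)))"
          by (simp add: sum.distrib sum_distrib_left)
        also have "(\<Sum>m<L. (if m = 0 then 0 else K c p (m - 1) (D + c))) = (\<Sum>m<L - 1. K c p m (D + c))"
          unfolding L' sum.lessThan_Suc_shift by simp
        finally show ?thesis .
      qed
      have "Ex p (st c L D) =
          p * ((real c - p / (1 - p)) * real L + (real D - 1) + p / (1 - p) * (\<Sum>m<L. K c p m (D - 1))) +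
          (1 - p) * ((real c - p / (1 - p)) * (real L - 1) + (real D + real c) + p / (1 - p) * (\<Sum>m<L - 1. K c p m (D + c)))"
        unfolding st1 e1 e2 ..
      also have "\<dots> = (real c - p / (1 - p)) * real L + real D + p / (1 - p) * (p * (\<Sum>m<L. K c p m (D - 1)) + (1 - p) * (\<Sum>m<L - 1. K c p m (D + c)))"
        by (rule alg1) (use q in simp_all)
      finally show ?thesis using Ksum by simp
    qed
  qed
qed


theorem proposition3p4:
  fixes k n :: nat and p :: real
  assumes "k \<ge> 2" and "0 < p" and "p < 1" and "n \<ge> 1"
  shows "M k n p = real ((k - 1) * n) - p / (1 - p) * (\<Sum>i<n. (1 - f_coeff k p i))"
proof -
  define c where "c = k - 1"
  have c1: "c \<ge> 1" using assms(1) by (simp add: c_def)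
  have k: "k = Suc c" using assms(1) by (simp add: c_def)
  have "M k n p = Ex p (st c n 0)" by (simp add: M_def Ex_def st_eq[OF c1] k)
  also have "\<dots> = (real c - p / (1 - p)) * real n + real 0 + p / (1 - p) * (\<Sum>m<n. K c p m 0)"
    by (rule G_formula[OF c1 assms(2,3)])
  also have "(\<Sum>m<n. K c p m 0) = (\<Sum>m<n. f_coeff k p m)"
    using K_f[OF c1 assms(2,3)] k by simp
  also have "(real c - p / (1 - p)) * real n + real 0 + p / (1 - p) * (\<Sum>m<n. f_coeff k p m)
      = real c * real n - p / (1 - p) * (real n - (\<Sum>m<n. f_coeff k p m))"
    by (simp add: algebra_simps)
  also have "real n - (\<Sum>m<n. f_coeff k p m) = (\<Sum>i<n. (1 - f_coeff k p i))"
    by (simp add: sum_subtractf)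
  finally show ?thesis by (simp add: c_def)
qed

end
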